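(* Let $G$ be a finite group and let $C\subset G$ be an abundant conjugacy class. Then for every positive integer $n$ divisible by $|G|^2$, there exists $s\in G\backslash\operatorname{Sur}^C_1(F_n,G)$ such that the image in $S_n$ of the stabilizer of $s$ in $B_n$ contains an $n$-cycle.
   Context: A conjugacy class $C$ of $G$ is abundant if for some (equivalently every) $x\in C$ there is $y\in G$ such that $\{y^{-r}xy^r:r\in\mathbb Z\}$ generates $G$. $\operatorname{Sur}^C_1(F_n,G)$ is the set of $(g_1,\dots,g_n)\in C^n$ with $\langle g_1,\dots,g_n\rangle=G$ and $g_1\cdots g_n=1$; $G\backslash\operatorname{Sur}^C_1(F_n,G)$ is its set of orbits under simultaneous conjugation $(g_i)\mapsto(gg_ig^{-1})$. $B_n$ acts on it from the right via $(\dots,g_i,g_{i+1},\dots)^{\sigma_i}=(\dots,g_{i+1},g_{i+1}^{-1}g_ig_{i+1},\dots)$ (this commutes with conjugation), and $B_n\to S_n$ sends $\sigma_i\mapsto(i\ i+1)$. *)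

theory Defs
  imports "HOL-Algebra.Algebra" "HOL-Combinatorics.Cycles"
begin

definition conj_class :: "('a, 'b) monoid_scheme \<Rightarrow> 'a \<Rightarrow> 'a set" where
  "conj_class G x = {g \<otimes>\<^bsub>G\<^esub> x \<otimes>\<^bsub>G\<^esub> inv\<^bsub>G\<^esub> g | g. g \<in> carrier G}"

definition is_conj_class :: "('a, 'b) monoid_scheme \<Rightarrow> 'a set \<Rightarrow> bool" where
  "is_conj_class G C \<longleftrightarrow> (\<exists>x \<in> carrier G. C = conj_class G x)"

text \<open>Abundant conjugacy class (the "for some x in C" version).\<close>
definition abundant :: "('a, 'b) monoid_scheme \<Rightarrow> 'a set \<Rightarrow> bool" where
  "abundant G C \<longleftrightarrow> (\<exists>x \<in> C. \<exists>y \<in> carrier G.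
     generate G {inv\<^bsub>G\<^esub> (y [^]\<^bsub>G\<^esub> r) \<otimes>\<^bsub>G\<^esub> x \<otimes>\<^bsub>G\<^esub> (y [^]\<^bsub>G\<^esub> r) | r::int. True} = carrier G)"

definition tuple_prod :: "('a, 'b) monoid_scheme \<Rightarrow> 'a list \<Rightarrow> 'a" where
  "tuple_prod G gs = foldr (\<lambda>x acc. x \<otimes>\<^bsub>G\<^esub> acc) gs \<one>\<^bsub>G\<^esub>"

text \<open>Sur^C_1(F_n, G): tuples in C^n generating G with product 1.\<close>
definition Sur1 :: "('a, 'b) monoid_scheme \<Rightarrow> 'a set \<Rightarrow> nat \<Rightarrow> 'a list set" where
  "Sur1 G C n = {gs. length gs = n \<and> set gs \<subseteq> C \<and> generate G (set gs) = carrier G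
                     \<and> tuple_prod G gs = \<one>\<^bsub>G\<^esub>}"

definition conj_tuple :: "('a, 'b) monoid_scheme \<Rightarrow> 'a \<Rightarrow> 'a list \<Rightarrow> 'a list" where
  "conj_tuple G g gs = map (\<lambda>x. g \<otimes>\<^bsub>G\<^esub> x \<otimes>\<^bsub>G\<^esub> inv\<^bsub>G\<^esub> g) gs"

definition Sur1_orbits :: "('a, 'b) monoid_scheme \<Rightarrow> 'a set \<Rightarrow> nat \<Rightarrow> 'a list set set" where
  "Sur1_orbits G C n = {{conj_tuple G g gs | g. g \<in> carrier G} | gs. gs \<in> Sur1 G C n}"

text \<open>Braids in B_n are represented by words in the standard generators:
  a letter (i, True) is sigma_(i+1), (i, False) is its inverse; positions are 0-based,
  so a valid letter has i + 1 < n.\<close>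
definition braid_word :: "nat \<Rightarrow> (nat \<times> bool) list \<Rightarrow> bool" where
  "braid_word n w \<longleftrightarrow> (\<forall>(i, _) \<in> set w. Suc i < n)"

definition gen_act :: "('a, 'b) monoid_scheme \<Rightarrow> nat \<times> bool \<Rightarrow> 'a list \<Rightarrow> 'a list" where
  "gen_act G l gs = (case l of (i, e) \<Rightarrow>
     (let a = gs ! i; b = gs ! Suc i in
      if e then gs[i := b, Suc i := inv\<^bsub>G\<^esub> b \<otimes>\<^bsub>G\<^esub> a \<otimes>\<^bsub>G\<^esub> b]
      else gs[i := a \<otimes>\<^bsub>G\<^esub> b \<otimes>\<^bsub>G\<^esub> inv\<^bsub>G\<^esub> a, Suc i := a]))"

definition braid_act :: "('a, 'b) monoid_scheme \<Rightarrow> (nat \<times> bool) list \<Rightarrow> 'a list \<Rightarrow> 'a list" where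
  "braid_act G w gs = fold (gen_act G) w gs"

definition braid_perm :: "(nat \<times> bool) list \<Rightarrow> nat \<Rightarrow> nat" where
  "braid_perm w = foldr (\<lambda>l p. transpose (fst l) (Suc (fst l)) \<circ> p) w id"

definition stab_image :: "('a, 'b) monoid_scheme \<Rightarrow> nat \<Rightarrow> 'a list set \<Rightarrow> (nat \<Rightarrow> nat) set" where
  "stab_image G n s = {braid_perm w | w. braid_word n w \<and> braid_act G w ` s = s}"

definition is_n_cycle :: "nat \<Rightarrow> (nat \<Rightarrow> nat) \<Rightarrow> bool" where
  "is_n_cycle n p \<longleftrightarrow> (\<exists>cs. distinct cs \<and> set cs = {0..<n} \<and> p = cycle_of_list cs)"

end

theory Submission
  imports Defs
begin

context group
begin

lemma tp_closed: "set xs \<subseteq> carrier G \<Longrightarrow> tuple_prod G xs \<in> carrier G"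
  by (induction xs) (auto simp: tuple_prod_def)

lemma tp_append: "set xs \<subseteq> carrier G \<Longrightarrow> set ys \<subseteq> carrier G \<Longrightarrow>
  tuple_prod G (xs @ ys) = tuple_prod G xs \<otimes> tuple_prod G ys"
proof (induction xs)
  case Nil then show ?case using tp_closed[of ys] by (simp add: tuple_prod_def)
next
  case (Cons a xs)
  then have "tuple_prod G ((a # xs) @ ys) = a \<otimes> (tuple_prod G xs \<otimes> tuple_prod G ys)"
    by (simp add: tuple_prod_def)
  also have "\<dots> = tuple_prod G (a # xs) \<otimes> tuple_prod G ys"
    using Cons.prems tp_closed[of xs] tp_closed[of ys] by (simp add: tuple_prod_def m_assoc)
  finally show ?case .
qed

lemma tp_cons: "tuple_prod G (a # xs) = a \<otimes> tuple_prod G xs"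
  by (simp add: tuple_prod_def)

lemma tp_conj: "g \<in> carrier G \<Longrightarrow> set xs \<subseteq> carrier G \<Longrightarrow>
  tuple_prod G (conj_tuple G g xs) = g \<otimes> tuple_prod G xs \<otimes> inv g"
proof (induction xs)
  case Nil then show ?case by (simp add: tuple_prod_def conj_tuple_def)
next
  case (Cons a xs)
  then have IH: "tuple_prod G (conj_tuple G g xs) = g \<otimes> tuple_prod G xs \<otimes> inv g" by simp
  have "tuple_prod G (conj_tuple G g (a # xs)) = (g \<otimes> a \<otimes> inv g) \<otimes> tuple_prod G (conj_tuple G g xs)"
    by (simp add: tuple_prod_def conj_tuple_def)
  also have "\<dots> = g \<otimes> (a \<otimes> tuple_prod G xs) \<otimes> inv g"
    using Cons.prems tp_closed[of xs] unfolding IH by (simp add: m_assoc) (simp add: m_assoc[symmetric])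
  finally show ?case by (simp add: tp_cons)
qed

lemma conj_conj: "g \<in> carrier G \<Longrightarrow> h \<in> carrier G \<Longrightarrow> set xs \<subseteq> carrier G \<Longrightarrow>
  conj_tuple G g (conj_tuple G h xs) = conj_tuple G (g \<otimes> h) xs"
  unfolding conj_tuple_def by (auto simp: m_assoc inv_mult_group subset_iff)

lemma gen_act_step:
  "gen_act G (length p, True) (p @ a # b # ys) = p @ b # (inv b \<otimes> a \<otimes> b) # ys"
  by (simp add: gen_act_def nth_append list_update_append)

lemma fold_shift:
  assumes "a \<in> carrier G" "set xs \<subseteq> carrier G"
  shows "fold (gen_act G) (map (\<lambda>j. (j, True)) [length p..<length p + length xs]) (p @ a # xs)
     = p @ xs @ [inv (tuple_prod G xs) \<otimes> a \<otimes> tuple_prod G xs]"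
  using assms
proof (induction xs arbitrary: p a)
  case Nil then show ?case by (simp add: tuple_prod_def)
next
  case (Cons b ys)
  have u: "[length p..<length p + length (b # ys)] = length p # [length (p @ [b])..<length (p @ [b]) + length ys]"
    by (simp add: upt_rec)
  have "fold (gen_act G) (map (\<lambda>j. (j, True)) [length p..<length p + length (b # ys)]) (p @ a # b # ys)
     = fold (gen_act G) (map (\<lambda>j. (j, True)) [length (p @ [b])..<length (p @ [b]) + length ys])
         ((p @ [b]) @ (inv b \<otimes> a \<otimes> b) # ys)"
    unfolding u by (simp add: gen_act_step)
  also have "\<dots> = (p @ [b]) @ ys @ [inv (tuple_prod G ys) \<otimes> (inv b \<otimes> a \<otimes> b) \<otimes> tuple_prod G ys]"
    using Cons by (intro Cons.IH) auto
  also have "inv (tuple_prod G ys) \<otimes> (inv b \<otimes> a \<otimes> b) \<otimes> tuple_prod G ys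
      = inv (tuple_prod G (b # ys)) \<otimes> a \<otimes> tuple_prod G (b # ys)"
    using Cons.prems tp_closed[of ys] by (simp add: tp_cons m_assoc inv_mult_group)
  finally show ?case by simp
qed

lemma braid_rotate:
  assumes "set gs \<subseteq> carrier G" "tuple_prod G gs = \<one>" "length gs = n" "n > 0"
  shows "braid_act G (map (\<lambda>j. (j, True)) [0..<n - 1]) gs = rotate1 gs"
proof -
  obtain a xs where gs: "gs = a # xs" using assms by (cases gs) auto
  have ax: "a \<in> carrier G" "set xs \<subseteq> carrier G" using assms gs by auto
  have "a \<otimes> tuple_prod G xs = \<one>" using assms(2) gs by (simp add: tp_cons)
  moreover have "tuple_prod G xs = inv a \<otimes> (a \<otimes> tuple_prod G xs)"
    using ax tp_closed[OF ax(2)] by (simp add: m_assoc[symmetric])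
  ultimately have ip: "tuple_prod G xs = inv a" using ax by simp
  have nl: "n - 1 = length xs" using assms(3) gs by simp
  have "braid_act G (map (\<lambda>j. (j, True)) [0..<n - 1]) gs
     = fold (gen_act G) (map (\<lambda>j. (j, True)) [length ([]::'a list)..<length ([]::'a list) + length xs]) ([] @ a # xs)"
    unfolding nl gs braid_act_def by simp
  also have "\<dots> = xs @ [inv (tuple_prod G xs) \<otimes> a \<otimes> tuple_prod G xs]"
    using fold_shift[OF ax, of "[]"] by simp
  also have "\<dots> = xs @ [a]" using ax ip by (simp add: m_assoc)
  finally show ?thesis using gs by simp
qed

end

lemma perm_cycle: "braid_perm (map (\<lambda>j. (j, True)) [m..<m + k]) = cycle_of_list [m..<m + k + 1]"
proof (induction k arbitrary: m)
  case 0 then show ?case by (simp add: braid_perm_def)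
next
  case (Suc k)
  have e1: "[m..<m + Suc k] = m # [Suc m..<Suc m + k]" by (simp add: upt_conv_Cons)
  have e3: "[Suc m..<Suc m + k + 1] = Suc m # [Suc (Suc m)..<Suc m + k + 1]" by (simp add: upt_conv_Cons)
  have e2: "[m..<m + Suc k + 1] = m # [Suc m..<Suc m + k + 1]" by (simp add: upt_conv_Cons)
  have "braid_perm (map (\<lambda>j. (j, True)) [m..<m + Suc k])
     = transpose m (Suc m) \<circ> braid_perm (map (\<lambda>j. (j, True)) [Suc m..<Suc m + k])"
    unfolding e1 by (simp add: braid_perm_def)
  also have "\<dots> = transpose m (Suc m) \<circ> cycle_of_list [Suc m..<Suc m + k + 1]"
    using Suc[of "Suc m"] by simp
  also have "\<dots> = cycle_of_list [m..<m + Suc k + 1]"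
    unfolding e2 unfolding e3 by simp
  finally show ?case .
qed


theorem proposition4p45:
  fixes G (structure) and C :: "'a set" and n :: nat
  assumes "group G" and "finite (carrier G)"
    and "is_conj_class G C" and "abundant G C"
    and "n > 0" and "(order G)^2 dvd n"
  shows "\<exists>s \<in> Sur1_orbits G C n. \<exists>p \<in> stab_image G n s. is_n_cycle n p"
proof -
  interpret group G by fact
  obtain x0 where x0: "x0 \<in> carrier G" "C = conj_class G x0"
    using assms(3) by (auto simp: is_conj_class_def)
  obtain x y where xC: "x \<in> C" and y: "y \<in> carrier G"
    and gen: "generate G {inv (y [^] r) \<otimes> x \<otimes> (y [^] r) | r::int. True} = carrier G"
    using assms(4) by (auto simp: abundant_def)
  obtain g0 where g0: "g0 \<in> carrier G" "x = g0 \<otimes> x0 \<otimes> inv g0"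
    using xC x0 by (auto simp: conj_class_def)
  have x: "x \<in> carrier G" using g0 x0 by simp
  have odvd: "order G dvd n" using assms(6)
    by (metis dvd_trans dvd_triv_left power2_eq_square)
  have pown: "z [^] n = \<one>" if "z \<in> carrier G" for z
  proof -
    obtain k where "n = order G * k" using odvd by blast
    then have "z [^] n = (z [^] order G) [^] k" using that by (simp add: nat_pow_pow)
    then show ?thesis using pow_order_eq_1[OF that] by simp
  qed
  define e where "e = (\<lambda>i::nat. inv (y [^] i) \<otimes> x \<otimes> y [^] i)"
  define gs where "gs = map e [0..<n]"
  have ecl: "e i \<in> carrier G" for i using x y by (simp add: e_def)
  have gscl: "set gs \<subseteq> carrier G" using ecl by (auto simp: gs_def)
  have eC: "e i \<in> C" for i
  proof -
    have "e i = (inv (y [^] i) \<otimes> g0) \<otimes> x0 \<otimes> inv (inv (y [^] i) \<otimes> g0)"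
      using g0 x0 y by (simp add: e_def inv_mult_group m_assoc)
    then show ?thesis using x0 g0 y unfolding conj_class_def by blast
  qed
  have prodk: "tuple_prod G (map e [0..<k]) = (x \<otimes> inv y) [^] k \<otimes> y [^] k" for k
  proof (induction k)
    case 0 then show ?case by (simp add: tuple_prod_def)
  next
    case (Suc k)
    have "tuple_prod G (map e [0..<Suc k]) = tuple_prod G (map e [0..<k]) \<otimes> tuple_prod G [e k]"
      using tp_append[of "map e [0..<k]" "[e k]"] ecl by auto
    also have "\<dots> = (x \<otimes> inv y) [^] k \<otimes> y [^] k \<otimes> (inv (y [^] k) \<otimes> x \<otimes> y [^] k)"
      unfolding Suc.IH using ecl by (simp add: tuple_prod_def e_def)
    also have "\<dots> = (x \<otimes> inv y) [^] k \<otimes> x \<otimes> y [^] k"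
      using x y by (simp add: m_assoc) (simp add: m_assoc[symmetric])
    also have "\<dots> = (x \<otimes> inv y) [^] k \<otimes> (x \<otimes> inv y) \<otimes> (y \<otimes> y [^] k)"
      using x y by (simp add: m_assoc) (simp add: m_assoc[symmetric])
    also have "\<dots> = (x \<otimes> inv y) [^] Suc k \<otimes> y [^] Suc k"
      using x y nat_pow_Suc[of y k] nat_pow_Suc2[OF y, of k] by simp
    finally show ?case .
  qed
  have gsprod: "tuple_prod G gs = \<one>"
    using prodk[of n] pown x y by (simp add: gs_def)
  have ordy: "ord y dvd n" using pown[OF y] pow_eq_id[OF y] by simp
  have Seq: "{inv (y [^] r) \<otimes> x \<otimes> (y [^] r) | r::int. True} = set gs"
  proof
    show "{inv (y [^] r) \<otimes> x \<otimes> (y [^] r) | r::int. True} \<subseteq> set gs"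
    proof
      fix z assume "z \<in> {inv (y [^] r) \<otimes> x \<otimes> (y [^] r) | r::int. True}"
      then obtain r :: int where z: "z = inv (y [^] r) \<otimes> x \<otimes> (y [^] r)" by blast
      define i where "i = nat (r mod int n)"
      have ii: "int i = r mod int n" using assms(5) by (simp add: i_def)
      have "i < n" using assms(5) i_def by (simp add: nat_less_iff)
      have "int n dvd (int i - r)" unfolding ii
        by (metis dvd_minus_mod dvd_minus_iff minus_diff_eq)
      then have "int (ord y) dvd (int i - r)" using ordy by (meson dvd_trans int_dvd_int_iff)
      then have "y [^] r = y [^] (int i)" using int_pow_eq[OF y] by blast
      then have "z = e i" using z by (simp add: e_def int_pow_int)
      then show "z \<in> set gs" using \<open>i < n\<close> by (simp add: gs_def)
    qed
    show "set gs \<subseteq> {inv (y [^] r) \<otimes> x \<otimes> (y [^] r) | r::int. True}"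
    proof
      fix z assume "z \<in> set gs"
      then obtain i where "z = e i" by (auto simp: gs_def)
      then have "z = inv (y [^] (int i)) \<otimes> x \<otimes> (y [^] (int i))" by (simp add: e_def int_pow_int)
      then show "z \<in> {inv (y [^] r) \<otimes> x \<otimes> (y [^] r) | r::int. True}" by blast
    qed
  qed
  have gsS: "gs \<in> Sur1 G C n"
    unfolding Sur1_def using gsprod gen Seq eC by (auto simp: gs_def)
  define s where "s = {conj_tuple G g gs | g. g \<in> carrier G}"
  have sO: "s \<in> Sur1_orbits G C n" unfolding Sur1_orbits_def s_def using gsS by blast
  define w where "w = map (\<lambda>j. (j, True)) [0..<n - 1]"
  have ncyc: "is_n_cycle n (braid_perm w)"
  proof -
    have "braid_perm w = cycle_of_list [0..<0 + (n - 1) + 1]"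
      unfolding w_def using perm_cycle[of 0 "n - 1"] by simp
    then show ?thesis using assms(5) unfolding is_n_cycle_def by (intro exI[of _ "[0..<n]"]) auto
  qed
  have bw: "braid_word n w" using assms(5) by (auto simp: braid_word_def w_def)
  have econj: "inv y \<otimes> e i \<otimes> inv (inv y) = e (Suc i)" for i
    using x y by (simp add: e_def m_assoc inv_mult_group nat_pow_Suc)
  have rot: "rotate1 gs = conj_tuple G (inv y) gs"
  proof -
    have "conj_tuple G (inv y) gs = map (e \<circ> Suc) [0..<n]"
      by (simp add: conj_tuple_def gs_def econj)
    also have "\<dots> = map e [Suc 0..<Suc n]" by (metis map_Suc_upt map_map)
    also have "\<dots> = map e [1..<n] @ [e n]" using assms(5) by simp
    also have "e n = e 0" using pown[OF y] x by (simp add: e_def)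
    also have "map e [1..<n] @ [e 0] = rotate1 gs"
      using assms(5) by (simp add: gs_def upt_conv_Cons)
    finally show ?thesis by simp
  qed
  have act: "braid_act G w (conj_tuple G g gs) = conj_tuple G (g \<otimes> inv y) gs"
    if g: "g \<in> carrier G" for g
  proof -
    have c1: "set (conj_tuple G g gs) \<subseteq> carrier G" using g gscl by (auto simp: conj_tuple_def)
    have c2: "tuple_prod G (conj_tuple G g gs) = \<one>" using g gscl gsprod by (simp add: tp_conj)
    have c3: "length (conj_tuple G g gs) = n" by (simp add: conj_tuple_def gs_def)
    have "braid_act G w (conj_tuple G g gs) = rotate1 (conj_tuple G g gs)"
      unfolding w_def using braid_rotate[OF c1 c2 c3 assms(5)] .
    also have "\<dots> = conj_tuple G g (rotate1 gs)" by (simp add: conj_tuple_def rotate1_map)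
    also have "\<dots> = conj_tuple G (g \<otimes> inv y) gs" using rot g y gscl by (simp add: conj_conj)
    finally show ?thesis .
  qed
  have stab: "braid_act G w ` s = s"
  proof
    show "braid_act G w ` s \<subseteq> s" unfolding s_def using act y by auto
    show "s \<subseteq> braid_act G w ` s"
    proof
      fix t assume "t \<in> s"
      then obtain h where h: "h \<in> carrier G" "t = conj_tuple G h gs" by (auto simp: s_def)
      have "t = braid_act G w (conj_tuple G (h \<otimes> y) gs)"
        using act[of "h \<otimes> y"] h y by (simp add: m_assoc)
      moreover have "conj_tuple G (h \<otimes> y) gs \<in> s" using h y unfolding s_def by blast
      ultimately show "t \<in> braid_act G w ` s" by blast
    qed
  qed
  have "braid_perm w \<in> stab_image G n s" unfolding stab_image_def using bw stab by blast
  then show ?thesis using sO ncyc by blast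
qed

end
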